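(* Let $\alpha>0$, $\lambda>0$ and $\bm{Z}\in\mathbb{R}^{m\times n}$. Then $$\|\bm{Z}\|_*^{\alpha}=\min_{\bm{Z}=\bm{U}\bm{V}^T}\tfrac12\Big(\lambda\|\bm{U}\|_F^{2\alpha}+\tfrac{1}{\lambda}\|\bm{V}\|_F^{2\alpha}\Big),$$ where the minimum is over all real matrices $\bm{U}\in\mathbb{R}^{m\times k}$, $\bm{V}\in\mathbb{R}^{n\times k}$ (any $k$) with $\bm{Z}=\bm{U}\bm{V}^T$. Moreover, if $\bm{Z}=\hat{\bm{U}}\bm{\Sigma}\hat{\bm{V}}^T$ is a (compact) singular value decomposition of $\bm{Z}$, equality holds for $\bm{U}=\lambda^{-1/(2\alpha)}\hat{\bm{U}}\sqrt{\bm{\Sigma}}$ and $\bm{V}=\lambda^{1/(2\alpha)}\hat{\bm{V}}\sqrt{\bm{\Sigma}}$, where $\sqrt{\bm{\Sigma}}$ is the entrywise square root of $\bm{\Sigma}$.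
   Context: $\|\cdot\|_*$ denotes the matrix trace (nuclear) norm, the sum of singular values; $\|\cdot\|_F$ is the Frobenius norm. *)

theory Defs
  imports "Jordan_Normal_Form.Char_Poly"
begin

definition frob_norm :: "real mat \<Rightarrow> real" where
  "frob_norm A = sqrt (\<Sum>i<dim_row A. \<Sum>j<dim_col A. (A $$ (i, j))\<^sup>2)"

text \<open>Nuclear (trace) norm: the sum of the singular values of Z, where the singular
  values are the square roots of the eigenvalues of Z^T Z, counted with
  (algebraic) multiplicity.\<close>
definition nuclear_norm :: "real mat \<Rightarrow> real" where
  "nuclear_norm Z =
     (let A = transpose_mat Z * Z in
       \<Sum>x\<in>{x. eigenvalue A x}. real (order x (char_poly A)) * sqrt x)"

definition compact_svd ::
  "real mat \<Rightarrow> nat \<Rightarrow> nat \<Rightarrow> nat \<Rightarrow> real mat \<Rightarrow> real mat \<Rightarrow> real mat \<Rightarrow> bool" where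
  "compact_svd Z m n r Uh S Vh \<longleftrightarrow>
     Uh \<in> carrier_mat m r \<and> S \<in> carrier_mat r r \<and> Vh \<in> carrier_mat n r \<and>
     transpose_mat Uh * Uh = 1\<^sub>m r \<and> transpose_mat Vh * Vh = 1\<^sub>m r \<and>
     diagonal_mat S \<and> (\<forall>i<r. S $$ (i, i) > 0) \<and>
     (\<forall>i j. i \<le> j \<and> j < r \<longrightarrow> S $$ (j, j) \<le> S $$ (i, i)) \<and>
     Z = Uh * S * transpose_mat Vh"

end

theory Submission
  imports Defs "HOL-Analysis.L2_Norm"
begin

definition orthonormal :: "nat \<Rightarrow> nat \<Rightarrow> (nat \<Rightarrow> real vec) \<Rightarrow> bool" where
 "orthonormal n k w \<longleftrightarrow> (\<forall>i<k. w i \<in> carrier_vec n) \<and>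
     (\<forall>i<k. \<forall>j<k. w i \<bullet> w j = (if i = j then 1 else 0))"

lemma sprod_sum: "v \<in> carrier_vec n \<Longrightarrow> u \<bullet> v = (\<Sum>a<n. u $ a * v $ a)"
  unfolding scalar_prod_def by (auto simp: atLeast0LessThan)

lemma orth_rows:
  assumes o: "orthonormal n n w" and a: "a < n" and b: "b < n"
  shows "(\<Sum>i<n. w i $ a * w i $ b) = (if a = b then 1 else 0)"
proof -
  define W where "W = mat n n (\<lambda>(a,i). w i $ a)"
  have W: "W \<in> carrier_mat n n" unfolding W_def by auto
  have WT: "transpose_mat W \<in> carrier_mat n n" using W by auto
  have "transpose_mat W * W = 1\<^sub>m n"
  proof (rule eq_matI)
    fix i j assume i: "i < dim_row (1\<^sub>m n)" and j: "j < dim_col (1\<^sub>m n)"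
    have "(transpose_mat W * W) $$ (i, j) = (\<Sum>a<n. w i $ a * w j $ a)"
      using i j W unfolding W_def by (auto simp: scalar_prod_def atLeast0LessThan)
    also have "\<dots> = w i \<bullet> w j" using o i j unfolding orthonormal_def
      by (subst sprod_sum[of _ n]) auto
    also have "\<dots> = 1\<^sub>m n $$ (i, j)" using o i j unfolding orthonormal_def by auto
    finally show "(transpose_mat W * W) $$ (i, j) = 1\<^sub>m n $$ (i, j)" .
  qed (use W in auto)
  hence "W * transpose_mat W = 1\<^sub>m n" using mat_mult_left_right_inverse[OF WT W] by auto
  hence "(W * transpose_mat W) $$ (a, b) = 1\<^sub>m n $$ (a, b)" by simp
  thus ?thesis using a b W unfolding W_def by (auto simp: scalar_prod_def atLeast0LessThan)
qed

lemma expansion: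
  assumes o: "orthonormal n n w" and x: "x \<in> carrier_vec n" and a: "a < n"
  shows "(\<Sum>i<n. (w i \<bullet> x) * w i $ a) = x $ a"
proof -
  have "(\<Sum>i<n. (w i \<bullet> x) * w i $ a) = (\<Sum>i<n. \<Sum>b<n. w i $ b * x $ b * w i $ a)"
    using x by (simp add: sprod_sum[OF x] sum_distrib_right)
  also have "\<dots> = (\<Sum>b<n. x $ b * (\<Sum>i<n. w i $ a * w i $ b))"
    by (subst sum.swap) (simp add: sum_distrib_left mult_ac)
  also have "\<dots> = (\<Sum>b<n. x $ b * (if a = b then 1 else 0))"
    using orth_rows[OF o a] by simp
  also have "\<dots> = x $ a" using a by (simp add: if_distrib cong: if_cong)
  finally show ?thesis .
qed

lemma parseval:
  assumes o: "orthonormal n n w" and x: "x \<in> carrier_vec n"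
  shows "(\<Sum>i<n. (w i \<bullet> x)\<^sup>2) = x \<bullet> x"
proof -
  have "(\<Sum>i<n. (w i \<bullet> x)\<^sup>2) = (\<Sum>i<n. (w i \<bullet> x) * (\<Sum>a<n. w i $ a * x $ a))"
    by (simp add: power2_eq_square sprod_sum[OF x])
  also have "\<dots> = (\<Sum>a<n. x $ a * (\<Sum>i<n. (w i \<bullet> x) * w i $ a))"
    by (simp add: sum_distrib_left sum_distrib_right mult_ac) (rule sum.swap)
  also have "\<dots> = (\<Sum>a<n. x $ a * x $ a)" using expansion[OF o x] by simp
  also have "\<dots> = x \<bullet> x" by (simp add: sprod_sum[OF x])
  finally show ?thesis .
qed

lemma kernel_vec:
  fixes w :: "nat \<Rightarrow> real vec"
  assumes k: "k < n" and w: "\<forall>i<k. w i \<in> carrier_vec n"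
  shows "\<exists>v. v \<in> carrier_vec n \<and> v \<noteq> 0\<^sub>v n \<and> (\<forall>i<k. w i \<bullet> v = 0)"
proof -
  define c where "c = (\<lambda>i. if i < k then w i else 0\<^sub>v n)"
  define M where "M = mat\<^sub>r n n (\<lambda>i. if i = k then 0\<^sub>v n else c i)"
  have c: "c \<in> {0..<n} \<rightarrow> carrier_vec n" using w unfolding c_def by auto
  have M: "M \<in> carrier_mat n n" unfolding M_def by auto
  have "det M = 0" unfolding M_def by (rule det_row_0[OF k c])
  then obtain v where v: "v \<in> carrier_vec n" "v \<noteq> 0\<^sub>v n" "M *\<^sub>v v = 0\<^sub>v n"
    using det_0_iff_vec_prod_zero[OF M] by auto
  have "\<forall>i<k. w i \<bullet> v = 0"
  proof (intro allI impI)
    fix i assume i: "i < k"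
    have "(M *\<^sub>v v) $ i = 0" using v(3) i k by simp
    moreover have "(M *\<^sub>v v) $ i = row M i \<bullet> v" using M i k by auto
    moreover have "row M i = w i" unfolding M_def using i k w c_def by auto
    ultimately show "w i \<bullet> v = 0" by simp
  qed
  with v show ?thesis by blast
qed

lemma sprod_self_pos:
  assumes v: "v \<in> carrier_vec n" and nz: "v \<noteq> 0\<^sub>v n"
  shows "v \<bullet> v > (0::real)"
proof -
  obtain a where a: "a < n" "v $ a \<noteq> 0" using v nz by (metis eq_vecI carrier_vecD index_zero_vec)
  have "v \<bullet> v = (\<Sum>b<n. (v $ b)\<^sup>2)" by (simp add: sprod_sum[OF v] power2_eq_square)
  also have "\<dots> \<ge> (v $ a)\<^sup>2" using a by (intro member_le_sum) auto
  finally show ?thesis using a by (smt (verit) power2_less_0 zero_less_power2)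
qed

lemma unit_orth_vec:
  fixes w :: "nat \<Rightarrow> real vec"
  assumes k: "k < n" and w: "\<forall>i<k. w i \<in> carrier_vec n"
  shows "\<exists>u. u \<in> carrier_vec n \<and> u \<bullet> u = 1 \<and> (\<forall>i<k. w i \<bullet> u = 0)"
proof -
  obtain v where v: "v \<in> carrier_vec n" "v \<noteq> 0\<^sub>v n" "\<forall>i<k. w i \<bullet> v = 0"
    using kernel_vec[OF k w] by blast
  have pos: "v \<bullet> v > 0" using sprod_self_pos[OF v(1,2)] .
  define u where "u = (1 / sqrt (v \<bullet> v)) \<cdot>\<^sub>v v"
  have "u \<bullet> u = (1 / sqrt (v \<bullet> v)) * (1 / sqrt (v \<bullet> v)) * (v \<bullet> v)"
    unfolding u_def using v(1) by (simp add: smult_scalar_prod_distrib scalar_prod_smult_distrib)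
  also have "\<dots> = 1" using pos by (simp add: field_simps)
  finally have "u \<bullet> u = 1" .
  moreover have "\<forall>i<k. w i \<bullet> u = 0" unfolding u_def using v w
    by (auto simp: scalar_prod_smult_distrib)
  moreover have "u \<in> carrier_vec n" unfolding u_def using v by auto
  ultimately show ?thesis by blast
qed

lemma orthonormal_extend:
  assumes "orthonormal n k w" "k \<le> n"
  shows "\<exists>w'. orthonormal n n w' \<and> (\<forall>i<k. w' i = w i)"
  using assms
proof (induction "n - k" arbitrary: k w)
  case 0
  then have "k = n" by simp
  then show ?case using 0 by blast
next
  case (Suc m)
  then have k: "k < n" by simp
  have wc: "\<forall>i<k. w i \<in> carrier_vec n" using Suc(3) unfolding orthonormal_def by auto
  obtain u where u: "u \<in> carrier_vec n" "u \<bullet> u = 1" "\<forall>i<k. w i \<bullet> u = 0"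
    using unit_orth_vec[OF k wc] by blast
  define w1 where "w1 = w(k := u)"
  have "orthonormal n (Suc k) w1"
    unfolding orthonormal_def
  proof (intro conjI allI impI)
    fix i assume "i < Suc k" thus "w1 i \<in> carrier_vec n" using wc u unfolding w1_def by auto
  next
    fix i j assume i: "i < Suc k" and j: "j < Suc k"
    show "w1 i \<bullet> w1 j = (if i = j then 1 else 0)"
    proof (cases "i = k"; cases "j = k")
      assume "i = k" "j = k" thus ?thesis using u unfolding w1_def by simp
    next
      assume "i = k" "j \<noteq> k" thus ?thesis using u wc j unfolding w1_def
        by (auto simp: comm_scalar_prod[of _ n])
    next
      assume "i \<noteq> k" "j = k" thus ?thesis using u wc i unfolding w1_def by auto
    next
      assume "i \<noteq> k" "j \<noteq> k" thus ?thesis using Suc(3) i j unfolding w1_def orthonormal_def by auto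
    qed
  qed
  moreover have "m = n - Suc k" using Suc(2) by arith
  ultimately obtain w' where "orthonormal n n w'" "\<forall>i<Suc k. w' i = w1 i"
    using Suc(1)[of "Suc k" w1] k by auto
  then show ?case unfolding w1_def by auto
qed

lemma orthonormal_le:
  assumes "orthonormal n k w" shows "k \<le> n"
proof (rule ccontr)
  assume "\<not> k \<le> n"
  hence nk: "n < k" by simp
  have o: "orthonormal n n w" using assms nk unfolding orthonormal_def by auto
  have x: "w n \<in> carrier_vec n" using assms nk unfolding orthonormal_def by auto
  have "w n \<bullet> w n = (\<Sum>i<n. (w i \<bullet> w n)\<^sup>2)" using parseval[OF o x] by simp
  also have "\<dots> = 0" using assms nk unfolding orthonormal_def by auto
  finally show False using assms nk unfolding orthonormal_def by auto
qed

lemma sym_real_eigenvector: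
  fixes C :: "real mat"
  assumes C: "C \<in> carrier_mat m m" and m: "m > 0" and sym: "transpose_mat C = C"
  shows "\<exists>\<mu> v. v \<in> carrier_vec m \<and> v \<noteq> 0\<^sub>v m \<and> C *\<^sub>v v = \<mu> \<cdot>\<^sub>v v"
proof -
  define C' where "C' = map_mat complex_of_real C"
  have C': "C' \<in> carrier_mat m m" unfolding C'_def using C by auto
  obtain as where as: "char_poly C' = (\<Prod>a\<leftarrow>as. [:- a, 1:])" "length as = m"
    using char_poly_factorized[OF C'] by blast
  then obtain a rest where ar: "as = a # rest" using m by (cases as) auto
  have "poly (char_poly C') a = 0" unfolding as ar by simp
  hence "eigenvalue C' a" using eigenvalue_root_char_poly[OF C'] by simp
  then obtain v where v: "v \<in> carrier_vec m" "v \<noteq> 0\<^sub>v m" "C' *\<^sub>v v = a \<cdot>\<^sub>v v"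
    unfolding eigenvalue_def eigenvector_def using C' by auto
  have Cij: "\<And>i j. i < m \<Longrightarrow> j < m \<Longrightarrow> C $$ (j, i) = C $$ (i, j)"
    using sym C by (metis carrier_matD index_transpose_mat(1))
  define s where "s = (\<Sum>i<m. \<Sum>j<m. cnj (v $ i) * C' $$ (i, j) * v $ j)"
  define N where "N = (\<Sum>i<m. cnj (v $ i) * v $ i)"
  have s1: "s = a * N"
  proof -
    have row: "\<And>i. i < m \<Longrightarrow> (C' *\<^sub>v v) $ i = (\<Sum>j<m. C' $$ (i, j) * v $ j)"
      using C' v(1) by (auto simp: scalar_prod_def atLeast0LessThan)
    have "s = (\<Sum>i<m. cnj (v $ i) * (C' *\<^sub>v v) $ i)"
      unfolding s_def by (simp add: row sum_distrib_left mult_ac)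
    also have "\<dots> = (\<Sum>i<m. cnj (v $ i) * (a * v $ i))" using v by simp
    finally show ?thesis unfolding N_def by (simp add: sum_distrib_left mult_ac)
  qed
  have s2: "cnj s = s"
  proof -
    have "cnj s = (\<Sum>i<m. \<Sum>j<m. v $ i * C' $$ (i, j) * cnj (v $ j))"
      unfolding s_def C'_def using C by (simp add: cnj_sum)
    also have "\<dots> = (\<Sum>j<m. \<Sum>i<m. v $ i * C' $$ (i, j) * cnj (v $ j))" by (rule sum.swap)
    also have "\<dots> = s" unfolding s_def C'_def using C Cij
      by (auto simp: mult_ac intro!: sum.cong)
    finally show ?thesis .
  qed
  have Nr: "N = complex_of_real (\<Sum>i<m. (cmod (v $ i))\<^sup>2)"
    unfolding N_def of_real_sum complex_norm_square by (simp add: mult.commute)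
  obtain i where i: "i < m" "v $ i \<noteq> 0" using v by (metis eq_vecI carrier_vecD index_zero_vec)
  have "(\<Sum>i<m. (cmod (v $ i))\<^sup>2) \<ge> (cmod (v $ i))\<^sup>2" using i by (intro member_le_sum) auto
  hence Npos: "(\<Sum>i<m. (cmod (v $ i))\<^sup>2) > 0" using i by (smt (verit) zero_less_norm_iff zero_less_power2)
  have "Im (cnj s) = Im s" using s2 by simp
  hence "Im s = 0" by simp
  hence ima: "Im a = 0" using s1 Nr Npos by simp
  define r where "r = Re a"
  have ar: "a = complex_of_real r" unfolding r_def using ima by (simp add: complex_eq_iff)
  have "char_poly C' = map_poly complex_of_real (char_poly C)"
    unfolding C'_def by (rule of_real_hom.char_poly_hom[OF C])
  hence "complex_of_real (poly (char_poly C) r) = 0" using \<open>poly (char_poly C') a = 0\<close> ar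
    by (simp add: of_real_hom.poly_map_poly)
  hence "poly (char_poly C) r = 0" by simp
  hence "eigenvalue C r" using eigenvalue_root_char_poly[OF C] by simp
  thus ?thesis unfolding eigenvalue_def eigenvector_def using C by auto
qed

lemma orthonormal_snoc:
  assumes o: "orthonormal n k w" and u: "u \<in> carrier_vec n" "u \<bullet> u = 1"
    and perp: "\<forall>i<k. w i \<bullet> u = 0"
  shows "orthonormal n (Suc k) (w(k := u))"
  unfolding orthonormal_def
proof (intro conjI allI impI)
  have wc: "\<forall>i<k. w i \<in> carrier_vec n" using o unfolding orthonormal_def by auto
  fix i assume "i < Suc k" thus "(w(k := u)) i \<in> carrier_vec n" using wc u by auto
next
  have wc: "\<forall>i<k. w i \<in> carrier_vec n" using o unfolding orthonormal_def by auto
  fix i j assume i: "i < Suc k" and j: "j < Suc k"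
  show "(w(k := u)) i \<bullet> (w(k := u)) j = (if i = j then 1 else 0)"
  proof (cases "i = k"; cases "j = k")
    assume "i = k" "j = k" thus ?thesis using u by simp
  next
    assume "i = k" "j \<noteq> k" thus ?thesis using u wc j perp
      by (auto simp: comm_scalar_prod[of _ n])
  next
    assume "i \<noteq> k" "j = k" thus ?thesis using u wc i perp by auto
  next
    assume "i \<noteq> k" "j \<noteq> k" thus ?thesis using o i j unfolding orthonormal_def by auto
  qed
qed

lemma sym_sprod:
  fixes A :: "real mat"
  assumes A: "A \<in> carrier_mat n n" and sym: "transpose_mat A = A"
    and x: "x \<in> carrier_vec n" and y: "y \<in> carrier_vec n"
  shows "x \<bullet> (A *\<^sub>v y) = (A *\<^sub>v x) \<bullet> y"
proof -
  have "(transpose_mat A *\<^sub>v x) \<bullet> y = x \<bullet> (A *\<^sub>v y)"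
    by (rule transpose_vec_mult_scalar[OF A y x])
  thus ?thesis using sym by simp
qed

lemma sprod_lincomb:
  fixes z :: "real vec"
  assumes z: "z \<in> carrier_vec n" and u: "\<forall>j\<in>J. u j \<in> carrier_vec n"
  shows "z \<bullet> vec n (\<lambda>a. \<Sum>j\<in>J. c j * u j $ a) = (\<Sum>j\<in>J. c j * (z \<bullet> u j))"
proof -
  have "z \<bullet> vec n (\<lambda>a. \<Sum>j\<in>J. c j * u j $ a) = (\<Sum>a<n. z $ a * (\<Sum>j\<in>J. c j * u j $ a))"
    by (simp add: sprod_sum[of _ n])
  also have "\<dots> = (\<Sum>j\<in>J. c j * (\<Sum>a<n. z $ a * u j $ a))"
    by (simp add: sum_distrib_left sum_distrib_right mult_ac) (rule sum.swap)
  also have "\<dots> = (\<Sum>j\<in>J. c j * (z \<bullet> u j))"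
    using u by (intro sum.cong refl) (simp add: sprod_sum[of _ n])
  finally show ?thesis .
qed

lemma vec_eq_by_basis:
  fixes x y :: "real vec"
  assumes o: "orthonormal n n b" and x: "x \<in> carrier_vec n" and y: "y \<in> carrier_vec n"
    and eq: "\<forall>l<n. b l \<bullet> x = b l \<bullet> y"
  shows "x = y"
proof (rule eq_vecI)
  fix a assume "a < dim_vec y"
  hence a: "a < n" using y by auto
  have "x $ a = (\<Sum>i<n. (b i \<bullet> x) * b i $ a)" using expansion[OF o x a] by simp
  also have "\<dots> = (\<Sum>i<n. (b i \<bullet> y) * b i $ a)" using eq by simp
  also have "\<dots> = y $ a" using expansion[OF o y a] .
  finally show "x $ a = y $ a" .
qed (use x y in auto)

lemma spectral_extend:
  fixes A :: "real mat"
  assumes A: "A \<in> carrier_mat n n" and sym: "transpose_mat A = A"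
    and o: "orthonormal n k w" and k: "k \<le> n"
    and ev: "\<forall>i<k. A *\<^sub>v w i = d i \<cdot>\<^sub>v w i"
  shows "\<exists>w' d'. orthonormal n n w' \<and> (\<forall>i<k. w' i = w i \<and> d' i = d i)
           \<and> (\<forall>i<n. A *\<^sub>v w' i = d' i \<cdot>\<^sub>v w' i)"
  using o k ev
proof (induction "n - k" arbitrary: k w d)
  case 0
  then have "k = n" by simp
  then show ?case using 0 by blast
next
  case (Suc m0)
  then have k: "k < n" by simp
  note o = Suc(3) note ev = Suc(5)
  obtain b where b: "orthonormal n n b" "\<forall>i<k. b i = w i"
    using orthonormal_extend[OF o] k by auto
  have bc: "\<And>i. i < n \<Longrightarrow> b i \<in> carrier_vec n" using b unfolding orthonormal_def by auto
  have bb: "\<And>i j. i < n \<Longrightarrow> j < n \<Longrightarrow> b i \<bullet> b j = (if i = j then 1 else 0)"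
    using b unfolding orthonormal_def by auto
  define m where "m = n - k"
  have m: "m > 0" unfolding m_def using k by simp
  define C where "C = mat m m (\<lambda>(i, j). b (k + i) \<bullet> (A *\<^sub>v b (k + j)))"
  have C: "C \<in> carrier_mat m m" unfolding C_def by auto
  have Csym: "transpose_mat C = C"
  proof (rule eq_matI)
    fix i j assume "i < dim_row C" "j < dim_col C"
    hence i: "i < m" and j: "j < m" using C by auto
    hence "k + i < n" "k + j < n" unfolding m_def by auto
    hence "b (k + j) \<bullet> (A *\<^sub>v b (k + i)) = b (k + i) \<bullet> (A *\<^sub>v b (k + j))"
      using sym_sprod[OF A sym] bc A by (metis comm_scalar_prod mult_mat_vec_carrier)
    thus "transpose_mat C $$ (i, j) = C $$ (i, j)" using i j unfolding C_def by auto
  qed (use C in auto)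
  obtain \<mu> y where y: "y \<in> carrier_vec m" "y \<noteq> 0\<^sub>v m" "C *\<^sub>v y = \<mu> \<cdot>\<^sub>v y"
    using sym_real_eigenvector[OF C m Csym] by blast
  define x where "x = vec n (\<lambda>a. \<Sum>j<m. y $ j * b (k + j) $ a)"
  have x: "x \<in> carrier_vec n" unfolding x_def by auto
  have bkc: "\<forall>j\<in>{..<m}. b (k + j) \<in> carrier_vec n" using bc unfolding m_def by auto
  have bx: "\<And>z. z \<in> carrier_vec n \<Longrightarrow> z \<bullet> x = (\<Sum>j<m. y $ j * (z \<bullet> b (k + j)))"
    unfolding x_def by (rule sprod_lincomb[OF _ bkc])
  have bx_lo: "\<And>l. l < k \<Longrightarrow> b l \<bullet> x = 0"
  proof -
    fix l assume l: "l < k"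
    have "b l \<bullet> x = (\<Sum>j<m. y $ j * (b l \<bullet> b (k + j)))" using bx bc l k by simp
    also have "\<dots> = 0" using bb l k unfolding m_def by (intro sum.neutral) auto
    finally show "b l \<bullet> x = 0" .
  qed
  have bx_hi: "\<And>i. i < m \<Longrightarrow> b (k + i) \<bullet> x = y $ i"
  proof -
    fix i assume i: "i < m"
    have "b (k + i) \<bullet> x = (\<Sum>j<m. y $ j * (b (k + i) \<bullet> b (k + j)))" using bx bc i unfolding m_def by simp
    also have "\<dots> = (\<Sum>j<m. if j = i then y $ j else 0)"
      using bb i unfolding m_def by (intro sum.cong refl) auto
    also have "\<dots> = y $ i" using i by simp
    finally show "b (k + i) \<bullet> x = y $ i" .
  qed
  have Ax: "A *\<^sub>v x = \<mu> \<cdot>\<^sub>v x"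
  proof (rule vec_eq_by_basis[OF b(1)])
    show "A *\<^sub>v x \<in> carrier_vec n" using A x by auto
    show "\<mu> \<cdot>\<^sub>v x \<in> carrier_vec n" using x by auto
    show "\<forall>l<n. b l \<bullet> (A *\<^sub>v x) = b l \<bullet> (\<mu> \<cdot>\<^sub>v x)"
    proof (intro allI impI)
      fix l assume l: "l < n"
      have eq1: "b l \<bullet> (A *\<^sub>v x) = (A *\<^sub>v b l) \<bullet> x" using sym_sprod[OF A sym bc[OF l] x] .
      show "b l \<bullet> (A *\<^sub>v x) = b l \<bullet> (\<mu> \<cdot>\<^sub>v x)"
      proof (cases "l < k")
        case True
        have "(A *\<^sub>v b l) \<bullet> x = d l * (b l \<bullet> x)" using ev True b(2) bc[OF l] x
          by (simp add: smult_scalar_prod_distrib)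
        thus ?thesis using eq1 bx_lo[OF True] bc[OF l] x by (simp add: scalar_prod_smult_distrib)
      next
        case False
        define i where "i = l - k"
        have i: "i < m" and li: "l = k + i" using False l unfolding i_def m_def by auto
        have "(A *\<^sub>v b l) \<bullet> x = (\<Sum>j<m. y $ j * ((A *\<^sub>v b l) \<bullet> b (k + j)))"
          using bx A bc[OF l] by simp
        also have "\<dots> = (\<Sum>j<m. C $$ (i, j) * y $ j)"
        proof (intro sum.cong refl)
          fix j assume "j \<in> {..<m}"
          hence j: "j < m" by simp
          hence "k + j < n" unfolding m_def by simp
          hence "(A *\<^sub>v b l) \<bullet> b (k + j) = b l \<bullet> (A *\<^sub>v b (k + j))"
            using sym_sprod[OF A sym bc[OF l] bc] by simp
          thus "y $ j * ((A *\<^sub>v b l) \<bullet> b (k + j)) = C $$ (i, j) * y $ j"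
            unfolding C_def li using i j by simp
        qed
        also have "\<dots> = (C *\<^sub>v y) $ i" using C y(1) i by (auto simp: scalar_prod_def atLeast0LessThan)
        also have "\<dots> = \<mu> * y $ i" using y i by simp
        also have "\<dots> = b l \<bullet> (\<mu> \<cdot>\<^sub>v x)" using bx_hi[OF i] li bc[OF l] x
          by (simp add: scalar_prod_smult_distrib)
        finally show ?thesis using eq1 by simp
      qed
    qed
  qed
  have xnz: "x \<noteq> 0\<^sub>v n"
  proof
    assume "x = 0\<^sub>v n"
    hence "\<forall>i<m. y $ i = 0" using bx_hi bc unfolding m_def
      by (metis add_less_cancel_left le_add_diff_inverse k less_imp_le scalar_prod_right_zero)
    hence "y = 0\<^sub>v m" using y(1) by (intro eq_vecI) auto
    thus False using y(2) by simp
  qed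
  have pos: "x \<bullet> x > 0" using sprod_self_pos[OF x xnz] .
  define u where "u = (1 / sqrt (x \<bullet> x)) \<cdot>\<^sub>v x"
  have u: "u \<in> carrier_vec n" unfolding u_def using x by auto
  have "u \<bullet> u = (1 / sqrt (x \<bullet> x)) * (1 / sqrt (x \<bullet> x)) * (x \<bullet> x)"
    unfolding u_def using x by (simp add: smult_scalar_prod_distrib scalar_prod_smult_distrib)
  also have "\<dots> = 1" using pos by (simp add: field_simps)
  finally have uu: "u \<bullet> u = 1" .
  have perp: "\<forall>i<k. w i \<bullet> u = 0"
  proof (intro allI impI)
    fix i assume i: "i < k"
    hence wi: "w i \<in> carrier_vec n" using b(2) bc k by (metis less_trans)
    show "w i \<bullet> u = 0" unfolding u_def using scalar_prod_smult_distrib[OF wi x] bx_lo[OF i] b(2) i by simp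
  qed
  have Au: "A *\<^sub>v u = \<mu> \<cdot>\<^sub>v u" unfolding u_def using Ax A x
    by (simp add: mult_mat_vec smult_smult_assoc mult.commute)
  define w1 where "w1 = w(k := u)"
  define d1 where "d1 = d(k := \<mu>)"
  have o1: "orthonormal n (Suc k) w1" unfolding w1_def by (rule orthonormal_snoc[OF o u uu perp])
  have ev1: "\<forall>i<Suc k. A *\<^sub>v w1 i = d1 i \<cdot>\<^sub>v w1 i" using ev Au unfolding w1_def d1_def by auto
  have "m0 = n - Suc k" using Suc(2) by arith
  then obtain w' d' where "orthonormal n n w'" "\<forall>i<Suc k. w' i = w1 i \<and> d' i = d1 i"
      "\<forall>i<n. A *\<^sub>v w' i = d' i \<cdot>\<^sub>v w' i"
    using Suc(1)[of "Suc k" w1 d1] o1 ev1 k by auto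
  then show ?case unfolding w1_def d1_def by (intro exI[of _ w'] exI[of _ d']) auto
qed

lemma prod_list_upt: "prod_list (map f [0..<n]) = (\<Prod>i<n. f i)"
  by (induction n) (auto simp: mult.commute lessThan_Suc)

lemma order_prod_linear:
  fixes d :: "nat \<Rightarrow> real"
  shows "order x (\<Prod>i<n. [:- d i, 1:]) = card {i. i < n \<and> d i = x}"
proof (induction n)
  case 0 then show ?case by simp
next
  case (Suc n)
  have p0: "(\<Prod>i<n. [:- d i, 1:]) \<noteq> 0" by (subst prod_zero_iff) auto
  have lin: "[:- d n, 1:] \<noteq> 0" by simp
  have nz: "(\<Prod>i<n. [:- d i, 1:]) * [:- d n, 1:] \<noteq> 0"
    by (rule no_zero_divisors[OF p0 lin])
  have "order x (\<Prod>i<Suc n. [:- d i, 1:]) = order x (\<Prod>i<n. [:- d i, 1:]) + order x [:- d n, 1:]"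
    unfolding prod.lessThan_Suc by (rule order_mult[OF nz])
  also have "\<dots> = card {i. i < n \<and> d i = x} + (if d n = x then 1 else 0)"
    using Suc by (simp add: order_linear')
  also have "\<dots> = card {i. i < Suc n \<and> d i = x}"
  proof (cases "d n = x")
    case True
    have "{i. i < Suc n \<and> d i = x} = insert n {i. i < n \<and> d i = x}" using True by auto
    thus ?thesis using True by simp
  next
    case False
    have "{i. i < Suc n \<and> d i = x} = {i. i < n \<and> d i = x}" using False less_Suc_eq by auto
    thus ?thesis using False by simp
  qed
  finally show ?case .
qed

lemma nuclear_from_eig:
  fixes Z :: "real mat"
  assumes Z: "Z \<in> carrier_mat m n" and o: "orthonormal n n w"
    and ev: "\<forall>i<n. (transpose_mat Z * Z) *\<^sub>v w i = d i \<cdot>\<^sub>v w i"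
  shows "nuclear_norm Z = (\<Sum>i<n. sqrt (d i))"
    and "\<forall>i<n. d i = (Z *\<^sub>v w i) \<bullet> (Z *\<^sub>v w i)"
proof -
  define A where "A = transpose_mat Z * Z"
  have A: "A \<in> carrier_mat n n" unfolding A_def using Z by auto
  have wc: "\<And>i. i < n \<Longrightarrow> w i \<in> carrier_vec n" using o unfolding orthonormal_def by auto
  have ww: "\<And>i j. i < n \<Longrightarrow> j < n \<Longrightarrow> w i \<bullet> w j = (if i = j then 1 else 0)"
    using o unfolding orthonormal_def by auto
  show dform: "\<forall>i<n. d i = (Z *\<^sub>v w i) \<bullet> (Z *\<^sub>v w i)"
  proof (intro allI impI)
    fix i assume i: "i < n"
    have "(Z *\<^sub>v w i) \<bullet> (Z *\<^sub>v w i) = (transpose_mat Z *\<^sub>v (Z *\<^sub>v w i)) \<bullet> w i"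
      using transpose_vec_mult_scalar[OF Z wc[OF i], of "Z *\<^sub>v w i"] Z wc[OF i] by auto
    also have "transpose_mat Z *\<^sub>v (Z *\<^sub>v w i) = A *\<^sub>v w i"
      unfolding A_def using Z wc[OF i] by (simp add: assoc_mult_mat_vec[of _ n m _ n])
    also have "\<dots> = d i \<cdot>\<^sub>v w i" using ev i unfolding A_def by simp
    also have "(d i \<cdot>\<^sub>v w i) \<bullet> w i = d i" using ww[OF i i] wc[OF i] by simp
    finally show "d i = (Z *\<^sub>v w i) \<bullet> (Z *\<^sub>v w i)" by simp
  qed
  define W where "W = mat n n (\<lambda>(a, i). w i $ a)"
  define D where "D = mat n n (\<lambda>(i, j). if i = j then d i else 0)"
  have W: "W \<in> carrier_mat n n" and D: "D \<in> carrier_mat n n" unfolding W_def D_def by auto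
  have colW: "\<And>i. i < n \<Longrightarrow> col W i = w i"
  proof -
    fix i assume i: "i < n"
    hence wi: "w i \<in> carrier_vec n" by (rule wc)
    thus "col W i = w i" unfolding W_def using i by (auto intro!: eq_vecI)
  qed
  have WTW: "transpose_mat W * W = 1\<^sub>m n"
  proof (rule eq_matI)
    fix i j assume "i < dim_row (1\<^sub>m n)" "j < dim_col (1\<^sub>m n)"
    hence i: "i < n" and j: "j < n" by auto
    have "(transpose_mat W * W) $$ (i, j) = col W i \<bullet> col W j" using W i j by simp
    thus "(transpose_mat W * W) $$ (i, j) = 1\<^sub>m n $$ (i, j)" using colW ww i j by simp
  qed (use W in auto)
  have WWT: "W * transpose_mat W = 1\<^sub>m n"
    using mat_mult_left_right_inverse[OF _ W WTW] W by auto
  have AW: "A * W = W * D"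
  proof (rule eq_matI)
    fix a i assume "a < dim_row (W * D)" "i < dim_col (W * D)"
    hence a: "a < n" and i: "i < n" using W D by auto
    have "(A * W) $$ (a, i) = (A *\<^sub>v w i) $ a" using A W a i colW[OF i] by simp
    also have "\<dots> = d i * w i $ a" using ev i a wc[OF i] unfolding A_def by simp
    also have "\<dots> = (W * D) $$ (a, i)"
    proof -
      have "(W * D) $$ (a, i) = (\<Sum>j<n. w j $ a * (if j = i then d i else 0))"
        using W D a i unfolding W_def D_def by (auto simp: scalar_prod_def atLeast0LessThan intro!: sum.cong)
      also have "\<dots> = d i * w i $ a" using i by (simp add: if_distrib cong: if_cong)
      finally show ?thesis by simp
    qed
    finally show "(A * W) $$ (a, i) = (W * D) $$ (a, i)" .
  qed (use A W D in auto)
  have AWD: "A = W * D * transpose_mat W"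
  proof -
    have "A = A * (W * transpose_mat W)" using A WWT by simp
    also have "\<dots> = (A * W) * transpose_mat W" using A W by (simp add: assoc_mult_mat[of _ n n _ n _ n])
    finally show ?thesis using AW by simp
  qed
  have sim: "similar_mat A D"
    by (rule similar_matI[where P=W and Q="transpose_mat W" and n=n]) (use A W D WWT WTW AWD in auto)
  have ut: "upper_triangular D" unfolding D_def upper_triangular_def by auto
  have diag: "diag_mat D = map d [0..<n]" unfolding diag_mat_def D_def by auto
  have cp: "char_poly A = (\<Prod>i<n. [:- d i, 1:])"
    using char_poly_similar[OF sim] char_poly_upper_triangular[OF D ut] diag
    by (simp add: prod_list_upt)
  have evs: "{x. eigenvalue A x} = d ` {..<n}"
  proof -
    have "{x. eigenvalue A x} = {x. poly (char_poly A) x = 0}"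
      using eigenvalue_root_char_poly[OF A] by auto
    also have "\<dots> = d ` {..<n}" unfolding cp by (auto simp: poly_prod_0)
    finally show ?thesis .
  qed
  have "nuclear_norm Z = (\<Sum>x\<in>d ` {..<n}. real (card {i. i < n \<and> d i = x}) * sqrt x)"
    unfolding nuclear_norm_def Let_def A_def[symmetric] evs cp order_prod_linear ..
  also have "\<dots> = (\<Sum>x\<in>d ` {..<n}. \<Sum>i\<in>{i \<in> {..<n}. d i = x}. sqrt (d i))"
  proof (intro sum.cong refl)
    fix x assume "x \<in> d ` {..<n}"
    have "(\<Sum>i\<in>{i \<in> {..<n}. d i = x}. sqrt (d i)) = (\<Sum>i\<in>{i \<in> {..<n}. d i = x}. sqrt x)" by simp
    also have "\<dots> = real (card {i. i < n \<and> d i = x}) * sqrt x" by simp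
    finally show "real (card {i. i < n \<and> d i = x}) * sqrt x = (\<Sum>i\<in>{i \<in> {..<n}. d i = x}. sqrt (d i))" by simp
  qed
  also have "\<dots> = (\<Sum>i<n. sqrt (d i))" by (rule sum.image_gen[symmetric]) simp
  finally show "nuclear_norm Z = (\<Sum>i<n. sqrt (d i))" .
qed

lemma sprod_self_nonneg:
  fixes v :: "real vec"
  shows "v \<bullet> v \<ge> 0"
  unfolding scalar_prod_def by (intro sum_nonneg) auto

lemma bessel:
  fixes x :: "real vec"
  assumes I: "finite I" and q: "\<forall>i\<in>I. q i \<in> carrier_vec m"
    and qq: "\<forall>i\<in>I. \<forall>j\<in>I. q i \<bullet> q j = (if i = j then 1 else 0)"
    and x: "x \<in> carrier_vec m"
  shows "(\<Sum>i\<in>I. (x \<bullet> q i)\<^sup>2) \<le> x \<bullet> x"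
proof -
  define c where "c i = x \<bullet> q i" for i
  define s where "s = vec m (\<lambda>a. \<Sum>i\<in>I. c i * q i $ a)"
  have s: "s \<in> carrier_vec m" unfolding s_def by auto
  have xs: "x \<bullet> s = (\<Sum>i\<in>I. (c i)\<^sup>2)"
    unfolding s_def by (subst sprod_lincomb[OF x q]) (simp add: c_def power2_eq_square)
  have qs: "\<And>j. j \<in> I \<Longrightarrow> q j \<bullet> s = c j"
  proof -
    fix j assume j: "j \<in> I"
    have "q j \<bullet> s = (\<Sum>i\<in>I. c i * (q j \<bullet> q i))"
      unfolding s_def by (rule sprod_lincomb) (use q j in auto)
    also have "\<dots> = (\<Sum>i\<in>I. if i = j then c i else 0)"
      using qq j by (intro sum.cong refl) auto
    also have "\<dots> = c j" using I j by simp
    finally show "q j \<bullet> s = c j" .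
  qed
  have ss: "s \<bullet> s = (\<Sum>i\<in>I. (c i)\<^sup>2)"
  proof -
    have "s \<bullet> s = (\<Sum>i\<in>I. c i * (s \<bullet> q i))"
      unfolding s_def by (subst sprod_lincomb[OF _ q]) (auto simp: s_def[symmetric] s)
    also have "\<dots> = (\<Sum>i\<in>I. (c i)\<^sup>2)"
      using qs q s by (intro sum.cong refl) (simp add: comm_scalar_prod[of _ m] power2_eq_square)
    finally show ?thesis .
  qed
  have "0 \<le> (\<Sum>a<m. (x $ a - s $ a)\<^sup>2)" by (intro sum_nonneg) auto
  also have "\<dots> = (\<Sum>a<m. x $ a * x $ a) - 2 * (\<Sum>a<m. x $ a * s $ a) + (\<Sum>a<m. s $ a * s $ a)"
  proof -
    have "(\<Sum>a<m. (x $ a - s $ a)\<^sup>2) = (\<Sum>a<m. x $ a * x $ a - 2 * (x $ a * s $ a) + s $ a * s $ a)"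
      by (intro sum.cong refl) (simp add: power2_eq_square algebra_simps)
    also have "\<dots> = (\<Sum>a<m. x $ a * x $ a) - 2 * (\<Sum>a<m. x $ a * s $ a) + (\<Sum>a<m. s $ a * s $ a)"
      by (simp add: sum.distrib sum_subtractf sum_distrib_left)
    finally show ?thesis .
  qed
  also have "\<dots> = x \<bullet> x - 2 * (x \<bullet> s) + s \<bullet> s" using x s by (simp add: sprod_sum[of _ m])
  finally have "0 \<le> x \<bullet> x - (\<Sum>i\<in>I. (c i)\<^sup>2)" using xs ss by simp
  thus ?thesis unfolding c_def by simp
qed

lemma cauchy_schwarz_sum:
  fixes f g :: "'a \<Rightarrow> real"
  shows "(\<Sum>p\<in>P. f p * g p) \<le> sqrt (\<Sum>p\<in>P. (f p)\<^sup>2) * sqrt (\<Sum>p\<in>P. (g p)\<^sup>2)"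
proof -
  have "(\<Sum>p\<in>P. f p * g p) \<le> (\<Sum>p\<in>P. \<bar>f p\<bar> * \<bar>g p\<bar>)"
    by (intro sum_mono) (simp add: abs_mult[symmetric])
  also have "\<dots> \<le> L2_set f P * L2_set g P" by (rule L2_set_mult_ineq)
  finally show ?thesis unfolding L2_set_def .
qed

lemma frob_sq:
  assumes U: "U \<in> carrier_mat m k"
  shows "(frob_norm U)\<^sup>2 = (\<Sum>c<k. col U c \<bullet> col U c)" and "frob_norm U \<ge> 0"
proof -
  have "(\<Sum>i<dim_row U. \<Sum>j<dim_col U. (U $$ (i, j))\<^sup>2) = (\<Sum>i<m. \<Sum>c<k. (U $$ (i, c))\<^sup>2)"
    using U by simp
  also have "\<dots> = (\<Sum>c<k. \<Sum>i<m. (U $$ (i, c))\<^sup>2)" by (rule sum.swap)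
  also have "\<dots> = (\<Sum>c<k. col U c \<bullet> col U c)"
    using U by (intro sum.cong refl) (auto simp: sprod_sum[of _ m] power2_eq_square)
  finally have e: "(\<Sum>i<dim_row U. \<Sum>j<dim_col U. (U $$ (i, j))\<^sup>2) = (\<Sum>c<k. col U c \<bullet> col U c)" .
  have nn: "(\<Sum>i<dim_row U. \<Sum>j<dim_col U. (U $$ (i, j))\<^sup>2) \<ge> 0" by (intro sum_nonneg) auto
  show "(frob_norm U)\<^sup>2 = (\<Sum>c<k. col U c \<bullet> col U c)"
    unfolding frob_norm_def using e nn by simp
  show "frob_norm U \<ge> 0" unfolding frob_norm_def using nn by simp
qed

lemma ZtZ_sym:
  fixes Z :: "real mat"
  assumes Z: "Z \<in> carrier_mat m n"
  shows "transpose_mat (transpose_mat Z * Z) = transpose_mat Z * Z"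
  using Z by (simp add: transpose_mult[of _ n m _ n])

lemma spectral_ZtZ:
  fixes Z :: "real mat"
  assumes Z: "Z \<in> carrier_mat m n"
  shows "\<exists>w d. orthonormal n n w \<and> (\<forall>i<n. (transpose_mat Z * Z) *\<^sub>v w i = d i \<cdot>\<^sub>v w i)"
proof -
  have A: "transpose_mat Z * Z \<in> carrier_mat n n" using Z by auto
  have o0: "orthonormal n 0 (\<lambda>_. 0\<^sub>v n)" unfolding orthonormal_def by auto
  show ?thesis using spectral_extend[OF A ZtZ_sym[OF Z] o0, of "\<lambda>_. 0"] by auto
qed

lemma nuc_le_frob:
  fixes Z U V :: "real mat"
  assumes U: "U \<in> carrier_mat m k" and V: "V \<in> carrier_mat n k" and ZUV: "Z = U * transpose_mat V"
  shows "nuclear_norm Z \<le> frob_norm U * frob_norm V"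
proof -
  have Z: "Z \<in> carrier_mat m n" using U V ZUV by auto
  obtain w d where o: "orthonormal n n w" and ev: "\<forall>i<n. (transpose_mat Z * Z) *\<^sub>v w i = d i \<cdot>\<^sub>v w i"
    using spectral_ZtZ[OF Z] by blast
  have N: "nuclear_norm Z = (\<Sum>i<n. sqrt (d i))" and dform: "\<forall>i<n. d i = (Z *\<^sub>v w i) \<bullet> (Z *\<^sub>v w i)"
    using nuclear_from_eig[OF Z o ev] by auto
  have wc: "\<And>i. i < n \<Longrightarrow> w i \<in> carrier_vec n" using o unfolding orthonormal_def by auto
  have ww: "\<And>i j. i < n \<Longrightarrow> j < n \<Longrightarrow> w i \<bullet> w j = (if i = j then 1 else 0)"
    using o unfolding orthonormal_def by auto
  define \<sigma> where "\<sigma> i = sqrt (d i)" for i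
  define z where "z i = Z *\<^sub>v w i" for i
  have zc: "\<And>i. z i \<in> carrier_vec m" unfolding z_def using Z by (intro carrier_vecI) simp
  have dnn: "\<And>i. i < n \<Longrightarrow> d i \<ge> 0" using dform sprod_self_nonneg by simp
  have sq: "\<And>i. i < n \<Longrightarrow> \<sigma> i * \<sigma> i = d i" unfolding \<sigma>_def using dnn by simp
  define B where "B i c = w i \<bullet> col V c" for i c
  define G where "G i c = col U c \<bullet> z i" for i c
  have Uc: "\<forall>c\<in>{..<k}. col U c \<in> carrier_vec m" using U by auto
  have Vc: "\<And>c. col V c \<in> carrier_vec n" using V by auto
  have zform: "\<And>i. i < n \<Longrightarrow> z i = vec m (\<lambda>a. \<Sum>c<k. B i c * col U c $ a)"
  proof -
    fix i assume i: "i < n"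
    show "z i = vec m (\<lambda>a. \<Sum>c<k. B i c * col U c $ a)"
    proof (rule eq_vecI)
      fix a assume "a < dim_vec (vec m (\<lambda>a. \<Sum>c<k. B i c * col U c $ a))"
      hence a: "a < m" by simp
      have "z i $ a = (\<Sum>b<n. Z $$ (a, b) * w i $ b)"
        unfolding z_def using Z a wc[OF i] by (auto simp: scalar_prod_def atLeast0LessThan)
      also have "\<dots> = (\<Sum>b<n. (\<Sum>c<k. U $$ (a, c) * V $$ (b, c)) * w i $ b)"
        unfolding ZUV using U V a by (intro sum.cong refl) (auto simp: scalar_prod_def atLeast0LessThan)
      also have "\<dots> = (\<Sum>c<k. U $$ (a, c) * (\<Sum>b<n. w i $ b * V $$ (b, c)))"
        by (simp add: sum_distrib_left sum_distrib_right mult_ac) (rule sum.swap)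
      also have "\<dots> = (\<Sum>c<k. B i c * col U c $ a)"
        unfolding B_def using U V a by (intro sum.cong refl) (auto simp: sprod_sum[of _ n])
      finally show "z i $ a = vec m (\<lambda>a. \<Sum>c<k. B i c * col U c $ a) $ a" using a by simp
    qed (use zc in auto)
  qed
  have key1: "\<And>i. i < n \<Longrightarrow> d i = (\<Sum>c<k. G i c * B i c)"
  proof -
    fix i assume i: "i < n"
    have "d i = z i \<bullet> z i" using dform i unfolding z_def by simp
    also have "\<dots> = z i \<bullet> vec m (\<lambda>a. \<Sum>c<k. B i c * col U c $ a)" using zform[OF i] by simp
    also have "\<dots> = (\<Sum>c<k. B i c * (z i \<bullet> col U c))" by (rule sprod_lincomb[OF zc Uc])
    also have "\<dots> = (\<Sum>c<k. G i c * B i c)" unfolding G_def using zc U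
      by (intro sum.cong refl) (simp add: comm_scalar_prod[of _ m])
    finally show "d i = (\<Sum>c<k. G i c * B i c)" .
  qed
  define a where "a i c = (if \<sigma> i > 0 then G i c / \<sigma> i else 0)" for i c
  have key2: "\<And>i. i < n \<Longrightarrow> \<sigma> i = (\<Sum>c<k. a i c * B i c)"
  proof -
    fix i assume i: "i < n"
    show "\<sigma> i = (\<Sum>c<k. a i c * B i c)"
    proof (cases "\<sigma> i > 0")
      case True
      have "(\<Sum>c<k. a i c * B i c) = (\<Sum>c<k. G i c * B i c) / \<sigma> i"
        unfolding a_def using True by (simp add: sum_divide_distrib)
      also have "\<dots> = d i / \<sigma> i" using key1[OF i] by simp
      also have "\<dots> = \<sigma> i" using sq[OF i] True by (simp add: field_simps)
      finally show ?thesis by simp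
    next
      case False
      have s0: "\<sigma> i \<ge> 0" unfolding \<sigma>_def using dnn[OF i] by simp
      have "\<sigma> i = 0" using False s0 by linarith
      thus ?thesis unfolding a_def using False by simp
    qed
  qed
  let ?P = "{..<n} \<times> {..<k}"
  have "nuclear_norm Z = (\<Sum>i<n. \<Sum>c<k. a i c * B i c)" using N key2 unfolding \<sigma>_def by simp
  also have "\<dots> = (\<Sum>p\<in>?P. a (fst p) (snd p) * B (fst p) (snd p))"
    by (simp add: sum.cartesian_product case_prod_beta)
  also have "\<dots> \<le> sqrt (\<Sum>p\<in>?P. (a (fst p) (snd p))\<^sup>2) * sqrt (\<Sum>p\<in>?P. (B (fst p) (snd p))\<^sup>2)"
    by (rule cauchy_schwarz_sum)
  finally have CS: "nuclear_norm Z \<le> sqrt (\<Sum>p\<in>?P. (a (fst p) (snd p))\<^sup>2) * sqrt (\<Sum>p\<in>?P. (B (fst p) (snd p))\<^sup>2)" .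
  have SB: "(\<Sum>p\<in>?P. (B (fst p) (snd p))\<^sup>2) = (frob_norm V)\<^sup>2"
  proof -
    have "(\<Sum>p\<in>?P. (B (fst p) (snd p))\<^sup>2) = (\<Sum>i<n. \<Sum>c<k. (B i c)\<^sup>2)"
      by (simp add: sum.cartesian_product case_prod_beta)
    also have "\<dots> = (\<Sum>c<k. \<Sum>i<n. (w i \<bullet> col V c)\<^sup>2)" unfolding B_def by (rule sum.swap)
    also have "\<dots> = (\<Sum>c<k. col V c \<bullet> col V c)" using parseval[OF o Vc] by simp
    also have "\<dots> = (frob_norm V)\<^sup>2" using frob_sq(1)[OF V] by simp
    finally show ?thesis .
  qed
  have SA: "(\<Sum>p\<in>?P. (a (fst p) (snd p))\<^sup>2) \<le> (frob_norm U)\<^sup>2"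
  proof -
    define I where "I = {i. i < n \<and> \<sigma> i > 0}"
    define q where "q i = (1 / \<sigma> i) \<cdot>\<^sub>v z i" for i
    have I: "finite I" unfolding I_def by simp
    have qc: "\<forall>i\<in>I. q i \<in> carrier_vec m" unfolding q_def using zc by auto
    have zz: "\<And>i j. i < n \<Longrightarrow> j < n \<Longrightarrow> z i \<bullet> z j = (if i = j then d i else 0)"
    proof -
      fix i j assume i: "i < n" and j: "j < n"
      have "z i \<bullet> z j = (transpose_mat Z *\<^sub>v z i) \<bullet> w j"
        unfolding z_def using transpose_vec_mult_scalar[OF Z wc[OF j] zc[of i, unfolded z_def]] by simp
      also have "transpose_mat Z *\<^sub>v z i = (transpose_mat Z * Z) *\<^sub>v w i"
        unfolding z_def using Z wc[OF i] by (simp add: assoc_mult_mat_vec[of _ n m _ n])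
      also have "\<dots> = d i \<cdot>\<^sub>v w i" using ev i by simp
      also have "(d i \<cdot>\<^sub>v w i) \<bullet> w j = d i * (w i \<bullet> w j)" using wc[OF i] wc[OF j] by simp
      finally show "z i \<bullet> z j = (if i = j then d i else 0)" using ww[OF i j] by simp
    qed
    have qq: "\<forall>i\<in>I. \<forall>j\<in>I. q i \<bullet> q j = (if i = j then 1 else 0)"
    proof (intro ballI)
      fix i j assume "i \<in> I" "j \<in> I"
      hence i: "i < n" "\<sigma> i > 0" and j: "j < n" "\<sigma> j > 0" unfolding I_def by auto
      have "q i \<bullet> q j = (1 / \<sigma> i) * (1 / \<sigma> j) * (z i \<bullet> z j)"
        unfolding q_def using zc[of i] zc[of j] by simp
      thus "q i \<bullet> q j = (if i = j then 1 else 0)" using zz[OF i(1) j(1)] sq[OF i(1)] i(2)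
        by (cases "i = j") (auto simp: field_simps)
    qed
    have "(\<Sum>p\<in>?P. (a (fst p) (snd p))\<^sup>2) = (\<Sum>i<n. \<Sum>c<k. (a i c)\<^sup>2)"
      by (simp add: sum.cartesian_product case_prod_beta)
    also have "\<dots> = (\<Sum>c<k. \<Sum>i<n. (a i c)\<^sup>2)" by (rule sum.swap)
    also have "\<dots> \<le> (\<Sum>c<k. col U c \<bullet> col U c)"
    proof (rule sum_mono)
      fix c assume c: "c \<in> {..<k}"
      have "(\<Sum>i<n. (a i c)\<^sup>2) = (\<Sum>i\<in>I. (col U c \<bullet> q i)\<^sup>2)"
      proof -
        have "(\<Sum>i<n. (a i c)\<^sup>2) = (\<Sum>i<n. if \<sigma> i > 0 then (col U c \<bullet> q i)\<^sup>2 else 0)"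
        proof (intro sum.cong refl)
          fix i assume "i \<in> {..<n}"
          have "col U c \<bullet> q i = (1 / \<sigma> i) * G i c"
            unfolding q_def G_def using scalar_prod_smult_distrib[OF _ zc[of i], of "col U c" "1 / \<sigma> i"] Uc c by simp
          thus "(a i c)\<^sup>2 = (if \<sigma> i > 0 then (col U c \<bullet> q i)\<^sup>2 else 0)"
            unfolding a_def by simp
        qed
        also have "\<dots> = (\<Sum>i\<in>I. (col U c \<bullet> q i)\<^sup>2)"
          unfolding I_def by (simp add: sum.inter_filter[symmetric] lessThan_def)
        finally show ?thesis .
      qed
      also have "\<dots> \<le> col U c \<bullet> col U c" by (rule bessel[OF I qc qq]) (use Uc c in auto)
      finally show "(\<Sum>i<n. (a i c)\<^sup>2) \<le> col U c \<bullet> col U c" .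
    qed
    also have "\<dots> = (frob_norm U)\<^sup>2" using frob_sq(1)[OF U] by simp
    finally show ?thesis .
  qed
  have "sqrt (\<Sum>p\<in>?P. (a (fst p) (snd p))\<^sup>2) \<le> sqrt ((frob_norm U)\<^sup>2)"
    using SA by (rule real_sqrt_le_mono)
  hence "sqrt (\<Sum>p\<in>?P. (a (fst p) (snd p))\<^sup>2) \<le> frob_norm U" using frob_sq(2)[OF U] by simp
  moreover have "sqrt (\<Sum>p\<in>?P. (B (fst p) (snd p))\<^sup>2) = frob_norm V" using SB frob_sq(2)[OF V] by simp
  ultimately show ?thesis using CS frob_sq(2)[OF V]
    by (smt (verit) mult_right_mono)
qed

lemma frob_smult:
  "frob_norm (c \<cdot>\<^sub>m A) = \<bar>c\<bar> * frob_norm A"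
proof -
  have "(\<Sum>i<dim_row A. \<Sum>j<dim_col A. ((c \<cdot>\<^sub>m A) $$ (i, j))\<^sup>2)
        = c\<^sup>2 * (\<Sum>i<dim_row A. \<Sum>j<dim_col A. (A $$ (i, j))\<^sup>2)"
    by (simp add: sum_distrib_left power_mult_distrib)
  thus ?thesis unfolding frob_norm_def by (simp add: real_sqrt_mult)
qed

lemma powr_double: "(x::real) powr (2 * a) = (x powr a)\<^sup>2"
  by (simp add: power2_eq_square powr_add[symmetric])

lemma scaled_obj:
  fixes \<alpha> lam N :: real and U0 V0 Z :: "real mat"
  assumes a: "\<alpha> > 0" and l: "lam > 0"
    and U0: "U0 \<in> carrier_mat m k" and V0: "V0 \<in> carrier_mat n k" and Z: "Z = U0 * transpose_mat V0"
    and fU: "(frob_norm U0)\<^sup>2 = N" and fV: "(frob_norm V0)\<^sup>2 = N"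
  shows "Z = ((lam powr (- 1 / (2 * \<alpha>))) \<cdot>\<^sub>m U0) * transpose_mat ((lam powr (1 / (2 * \<alpha>))) \<cdot>\<^sub>m V0)"
    and "N powr \<alpha> = (1/2) * (lam * frob_norm ((lam powr (- 1 / (2 * \<alpha>))) \<cdot>\<^sub>m U0) powr (2 * \<alpha>)
             + (1 / lam) * frob_norm ((lam powr (1 / (2 * \<alpha>))) \<cdot>\<^sub>m V0) powr (2 * \<alpha>))"
proof -
  define c1 where "c1 = lam powr (- 1 / (2 * \<alpha>))"
  define c2 where "c2 = lam powr (1 / (2 * \<alpha>))"
  have c12: "c1 * c2 = 1" unfolding c1_def c2_def using l by (simp add: powr_add[symmetric])
  have c1p: "c1 > 0" and c2p: "c2 > 0" unfolding c1_def c2_def using l by auto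
  show "Z = (c1 \<cdot>\<^sub>m U0) * transpose_mat (c2 \<cdot>\<^sub>m V0)" unfolding c1_def[symmetric] c2_def[symmetric]
  proof (rule eq_matI)
    fix i j assume "i < dim_row ((c1 \<cdot>\<^sub>m U0) * transpose_mat (c2 \<cdot>\<^sub>m V0))"
      "j < dim_col ((c1 \<cdot>\<^sub>m U0) * transpose_mat (c2 \<cdot>\<^sub>m V0))"
    hence i: "i < m" and j: "j < n" using U0 V0 by auto
    have "((c1 \<cdot>\<^sub>m U0) * transpose_mat (c2 \<cdot>\<^sub>m V0)) $$ (i, j)
        = (\<Sum>c<k. (c1 * U0 $$ (i, c)) * (c2 * V0 $$ (j, c)))"
      using U0 V0 i j by (simp add: scalar_prod_def atLeast0LessThan)
    also have "\<dots> = (c1 * c2) * (\<Sum>c<k. U0 $$ (i, c) * V0 $$ (j, c))"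
      by (simp add: sum_distrib_left mult_ac)
    also have "\<dots> = Z $$ (i, j)" using c12 Z U0 V0 i j by (simp add: scalar_prod_def atLeast0LessThan)
    finally show "Z $$ (i, j) = ((c1 \<cdot>\<^sub>m U0) * transpose_mat (c2 \<cdot>\<^sub>m V0)) $$ (i, j)" by simp
  qed (use Z U0 V0 in auto)
  have N0: "N \<ge> 0" using fU by auto
  have fU0: "frob_norm U0 \<ge> 0" and fV0: "frob_norm V0 \<ge> 0" using frob_sq(2)[OF U0] frob_sq(2)[OF V0] by auto
  have e1: "frob_norm U0 powr (2 * \<alpha>) = N powr \<alpha>"
    using fU fU0 by (simp add: powr_double powr_powr[symmetric] powr_half_sqrt[symmetric] N0 powr_mult_base)
  have e2: "frob_norm V0 powr (2 * \<alpha>) = N powr \<alpha>"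
    using fV fV0 by (simp add: powr_double powr_powr[symmetric] powr_half_sqrt[symmetric] N0 powr_mult_base)
  have p1: "c1 powr (2 * \<alpha>) = 1 / lam"
  proof -
    have "c1 powr (2 * \<alpha>) = lam powr ((- 1 / (2 * \<alpha>)) * (2 * \<alpha>))" unfolding c1_def by (rule powr_powr)
    also have "(- 1 / (2 * \<alpha>)) * (2 * \<alpha>) = - 1" using a by simp
    also have "lam powr (- 1) = 1 / lam" using l by (simp add: powr_minus_divide)
    finally show ?thesis .
  qed
  have p2: "c2 powr (2 * \<alpha>) = lam" unfolding c2_def using l a
    by (simp add: powr_powr)
  have "lam * frob_norm (c1 \<cdot>\<^sub>m U0) powr (2 * \<alpha>) = N powr \<alpha>"
    using c1p fU0 l by (simp add: frob_smult powr_mult p1 e1)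
  moreover have "(1 / lam) * frob_norm (c2 \<cdot>\<^sub>m V0) powr (2 * \<alpha>) = N powr \<alpha>"
    using c2p fV0 l by (simp add: frob_smult powr_mult p2 e2)
  ultimately show "N powr \<alpha> = (1/2) * (lam * frob_norm (c1 \<cdot>\<^sub>m U0) powr (2 * \<alpha>)
             + (1 / lam) * frob_norm (c2 \<cdot>\<^sub>m V0) powr (2 * \<alpha>))" by simp
qed

lemma amgm_obj:
  fixes \<alpha> lam x y N :: real
  assumes a: "\<alpha> > 0" and l: "lam > 0" and x: "x \<ge> 0" and y: "y \<ge> 0"
    and N0: "N \<ge> 0" and N: "N \<le> x * y"
  shows "N powr \<alpha> \<le> (1/2) * (lam * x powr (2 * \<alpha>) + (1 / lam) * y powr (2 * \<alpha>))"
proof -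
  define p where "p = x powr \<alpha>"
  define q where "q = y powr \<alpha>"
  have "N powr \<alpha> \<le> (x * y) powr \<alpha>" using N N0 a by (intro powr_mono2) auto
  also have "\<dots> = p * q" unfolding p_def q_def using x y by (simp add: powr_mult)
  also have "\<dots> \<le> (1/2) * (lam * p\<^sup>2 + (1 / lam) * q\<^sup>2)"
  proof -
    have "0 \<le> (lam * p - q)\<^sup>2 / lam" using l by simp
    also have "(lam * p - q)\<^sup>2 / lam = lam * p\<^sup>2 + (1 / lam) * q\<^sup>2 - 2 * (p * q)"
      using l by (simp add: power2_eq_square field_simps)
    finally show ?thesis by simp
  qed
  also have "\<dots> = (1/2) * (lam * x powr (2 * \<alpha>) + (1 / lam) * y powr (2 * \<alpha>))"
    unfolding p_def q_def by (simp add: powr_double)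
  finally show ?thesis .
qed

lemma zero_if_sprod_zero:
  fixes v :: "real vec"
  assumes "v \<in> carrier_vec m" "v \<bullet> v = 0" shows "v = 0\<^sub>v m"
  using sprod_self_pos[OF assms(1)] assms(2) by force

lemma exists_balanced:
  fixes Z :: "real mat"
  assumes Z: "Z \<in> carrier_mat m n"
  shows "\<exists>U0 V0. U0 \<in> carrier_mat m n \<and> V0 \<in> carrier_mat n n \<and> Z = U0 * transpose_mat V0
            \<and> (frob_norm U0)\<^sup>2 = nuclear_norm Z \<and> (frob_norm V0)\<^sup>2 = nuclear_norm Z"
    and "nuclear_norm Z \<ge> 0"
proof -
  obtain w d where o: "orthonormal n n w" and ev: "\<forall>i<n. (transpose_mat Z * Z) *\<^sub>v w i = d i \<cdot>\<^sub>v w i"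
    using spectral_ZtZ[OF Z] by blast
  have N: "nuclear_norm Z = (\<Sum>i<n. sqrt (d i))" and dform: "\<forall>i<n. d i = (Z *\<^sub>v w i) \<bullet> (Z *\<^sub>v w i)"
    using nuclear_from_eig[OF Z o ev] by auto
  have wc: "\<And>i. i < n \<Longrightarrow> w i \<in> carrier_vec n" using o unfolding orthonormal_def by auto
  have ww: "\<And>i j. i < n \<Longrightarrow> j < n \<Longrightarrow> w i \<bullet> w j = (if i = j then 1 else 0)"
    using o unfolding orthonormal_def by auto
  define \<sigma> where "\<sigma> i = sqrt (d i)" for i
  define z where "z i = Z *\<^sub>v w i" for i
  define t where "t i = sqrt (\<sigma> i)" for i
  have zc: "\<And>i. z i \<in> carrier_vec m" unfolding z_def using Z by (intro carrier_vecI) simp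
  have dnn: "\<And>i. i < n \<Longrightarrow> d i \<ge> 0" using dform sprod_self_nonneg by simp
  have snn: "\<And>i. i < n \<Longrightarrow> \<sigma> i \<ge> 0" unfolding \<sigma>_def using dnn by simp
  have sq: "\<And>i. i < n \<Longrightarrow> \<sigma> i * \<sigma> i = d i" unfolding \<sigma>_def using dnn by simp
  have tsq: "\<And>i. i < n \<Longrightarrow> t i * t i = \<sigma> i" unfolding t_def using snn by simp
  have z0: "\<And>i. i < n \<Longrightarrow> \<not> \<sigma> i > 0 \<Longrightarrow> z i = 0\<^sub>v m"
  proof -
    fix i assume i: "i < n" and s: "\<not> \<sigma> i > 0"
    hence "\<sigma> i = 0" using snn[OF i] by simp
    hence "d i = 0" using sq[OF i] by simp
    hence "z i \<bullet> z i = 0" using dform i unfolding z_def by simp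
    thus "z i = 0\<^sub>v m" using zero_if_sprod_zero[OF zc] by blast
  qed
  show "nuclear_norm Z \<ge> 0" unfolding N using dnn by (intro sum_nonneg) simp
  define V0 where "V0 = mat n n (\<lambda>(b, i). t i * w i $ b)"
  define U0 where "U0 = mat m n (\<lambda>(a, i). if \<sigma> i > 0 then z i $ a / t i else 0)"
  have U0: "U0 \<in> carrier_mat m n" and V0: "V0 \<in> carrier_mat n n" unfolding U0_def V0_def by auto
  have colV: "\<And>i. i < n \<Longrightarrow> col V0 i = t i \<cdot>\<^sub>v w i"
  proof -
    fix i assume i: "i < n"
    show "col V0 i = t i \<cdot>\<^sub>v w i" unfolding V0_def using i wc[OF i] by (auto intro!: eq_vecI)
  qed
  have colU: "\<And>i. i < n \<Longrightarrow> col U0 i = (if \<sigma> i > 0 then (1 / t i) \<cdot>\<^sub>v z i else 0\<^sub>v m)"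
  proof -
    fix i assume i: "i < n"
    show "col U0 i = (if \<sigma> i > 0 then (1 / t i) \<cdot>\<^sub>v z i else 0\<^sub>v m)"
      unfolding U0_def using i zc[of i] by (auto intro!: eq_vecI)
  qed
  have ZU: "Z = U0 * transpose_mat V0"
  proof (rule eq_matI)
    fix a b assume "a < dim_row (U0 * transpose_mat V0)" "b < dim_col (U0 * transpose_mat V0)"
    hence a: "a < m" and b: "b < n" using U0 V0 by auto
    have "(U0 * transpose_mat V0) $$ (a, b) = (\<Sum>i<n. U0 $$ (a, i) * V0 $$ (b, i))"
      using U0 V0 a b by (simp add: scalar_prod_def atLeast0LessThan)
    also have "\<dots> = (\<Sum>i<n. z i $ a * w i $ b)"
    proof (intro sum.cong refl)
      fix i assume "i \<in> {..<n}"
      hence i: "i < n" by simp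
      show "U0 $$ (a, i) * V0 $$ (b, i) = z i $ a * w i $ b"
      proof (cases "\<sigma> i > 0")
        case True
        hence "t i > 0" unfolding t_def by simp
        thus ?thesis unfolding U0_def V0_def using a b i True by simp
      next
        case False
        thus ?thesis unfolding U0_def V0_def using a b i z0[OF i False] by simp
      qed
    qed
    also have "\<dots> = (\<Sum>i<n. (\<Sum>c<n. Z $$ (a, c) * w i $ c) * w i $ b)"
    proof (intro sum.cong refl)
      fix i assume "i \<in> {..<n}"
      hence i: "i < n" by simp
      have "z i $ a = (\<Sum>c<n. Z $$ (a, c) * w i $ c)" unfolding z_def
        using Z a wc[OF i] by (auto simp: sprod_sum[of _ n] intro!: sum.cong)
      thus "z i $ a * w i $ b = (\<Sum>c<n. Z $$ (a, c) * w i $ c) * w i $ b" by simp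
    qed
    also have "\<dots> = (\<Sum>c<n. Z $$ (a, c) * (\<Sum>i<n. w i $ c * w i $ b))"
      by (simp add: sum_distrib_left sum_distrib_right mult_ac) (rule sum.swap)
    also have "\<dots> = (\<Sum>c<n. Z $$ (a, c) * (if c = b then 1 else 0))"
      using orth_rows[OF o _ b] by (intro sum.cong refl) simp
    also have "\<dots> = Z $$ (a, b)" using b by (simp add: if_distrib cong: if_cong)
    finally show "Z $$ (a, b) = (U0 * transpose_mat V0) $$ (a, b)" by simp
  qed (use Z U0 V0 in auto)
  have fV: "(frob_norm V0)\<^sup>2 = nuclear_norm Z"
  proof -
    have "(frob_norm V0)\<^sup>2 = (\<Sum>i<n. col V0 i \<bullet> col V0 i)" by (rule frob_sq(1)[OF V0])
    also have "\<dots> = (\<Sum>i<n. \<sigma> i)"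
    proof (intro sum.cong refl)
      fix i assume "i \<in> {..<n}"
      hence i: "i < n" by simp
      have "col V0 i \<bullet> col V0 i = t i * t i * (w i \<bullet> w i)" using colV[OF i] wc[OF i] by simp
      thus "col V0 i \<bullet> col V0 i = \<sigma> i" using ww[OF i i] tsq[OF i] by simp
    qed
    finally show ?thesis unfolding N \<sigma>_def .
  qed
  have fU: "(frob_norm U0)\<^sup>2 = nuclear_norm Z"
  proof -
    have "(frob_norm U0)\<^sup>2 = (\<Sum>i<n. col U0 i \<bullet> col U0 i)" by (rule frob_sq(1)[OF U0])
    also have "\<dots> = (\<Sum>i<n. \<sigma> i)"
    proof (intro sum.cong refl)
      fix i assume "i \<in> {..<n}"
      hence i: "i < n" by simp
      show "col U0 i \<bullet> col U0 i = \<sigma> i"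
      proof (cases "\<sigma> i > 0")
        case True
        have "col U0 i \<bullet> col U0 i = (1 / t i) * (1 / t i) * (z i \<bullet> z i)"
          using colU[OF i] True zc[of i] by simp
        also have "z i \<bullet> z i = \<sigma> i * \<sigma> i" using dform i sq[OF i] unfolding z_def by simp
        finally show ?thesis using tsq[OF i] True by (simp add: field_simps)
      next
        case False
        thus ?thesis using colU[OF i] snn[OF i] by simp
      qed
    qed
    finally show ?thesis unfolding N \<sigma>_def .
  qed
  show "\<exists>U0 V0. U0 \<in> carrier_mat m n \<and> V0 \<in> carrier_mat n n \<and> Z = U0 * transpose_mat V0
            \<and> (frob_norm U0)\<^sup>2 = nuclear_norm Z \<and> (frob_norm V0)\<^sup>2 = nuclear_norm Z"
    using U0 V0 ZU fU fV by blast
qed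

lemma mult_diag_right:
  fixes A D :: "real mat"
  assumes A: "A \<in> carrier_mat p r" and D: "D \<in> carrier_mat r r" and dg: "diagonal_mat D"
    and f0: "f 0 = 0"
  shows "A * map_mat f D = mat p r (\<lambda>(a, i). A $$ (a, i) * f (D $$ (i, i)))"
proof (rule eq_matI)
  fix a i assume "a < dim_row (mat p r (\<lambda>(a, i). A $$ (a, i) * f (D $$ (i, i))))"
    "i < dim_col (mat p r (\<lambda>(a, i). A $$ (a, i) * f (D $$ (i, i))))"
  hence a: "a < p" and i: "i < r" by auto
  have "(A * map_mat f D) $$ (a, i) = (\<Sum>j<r. A $$ (a, j) * f (D $$ (j, i)))"
    using A D a i by (auto simp: scalar_prod_def atLeast0LessThan intro!: sum.cong)
  also have "\<dots> = (\<Sum>j<r. if j = i then A $$ (a, i) * f (D $$ (i, i)) else 0)"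
    using dg D i f0 unfolding diagonal_mat_def by (intro sum.cong refl) auto
  also have "\<dots> = A $$ (a, i) * f (D $$ (i, i))" using i by simp
  finally show "(A * map_mat f D) $$ (a, i) = mat p r (\<lambda>(a, i). A $$ (a, i) * f (D $$ (i, i))) $$ (a, i)"
    using a i by simp
qed (use A D in auto)

lemma svd_facts:
  fixes Z :: "real mat"
  assumes Z: "Z \<in> carrier_mat m n" and svd: "compact_svd Z m n r Uh S Vh"
  shows "Z = (Uh * map_mat sqrt S) * transpose_mat (Vh * map_mat sqrt S)"
    and "(frob_norm (Uh * map_mat sqrt S))\<^sup>2 = nuclear_norm Z"
    and "(frob_norm (Vh * map_mat sqrt S))\<^sup>2 = nuclear_norm Z"
    and "Uh * map_mat sqrt S \<in> carrier_mat m r" and "Vh * map_mat sqrt S \<in> carrier_mat n r"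
proof -
  have Uh: "Uh \<in> carrier_mat m r" and S: "S \<in> carrier_mat r r" and Vh: "Vh \<in> carrier_mat n r"
    and UU: "transpose_mat Uh * Uh = 1\<^sub>m r" and VV: "transpose_mat Vh * Vh = 1\<^sub>m r"
    and dg: "diagonal_mat S" and spos: "\<forall>i<r. S $$ (i, i) > 0"
    and ZS: "Z = Uh * S * transpose_mat Vh"
    using svd unfolding compact_svd_def by auto
  define s where "s i = S $$ (i, i)" for i
  define U0 where "U0 = Uh * map_mat sqrt S"
  define V0 where "V0 = Vh * map_mat sqrt S"
  have U0: "U0 \<in> carrier_mat m r" and V0: "V0 \<in> carrier_mat n r" unfolding U0_def V0_def using Uh Vh S by auto
  show "Uh * map_mat sqrt S \<in> carrier_mat m r" "Vh * map_mat sqrt S \<in> carrier_mat n r"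
    using U0 V0 unfolding U0_def V0_def by auto
  have U0e: "U0 = mat m r (\<lambda>(a, i). Uh $$ (a, i) * sqrt (s i))"
    unfolding U0_def s_def by (rule mult_diag_right[OF Uh S dg]) simp
  have V0e: "V0 = mat n r (\<lambda>(a, i). Vh $$ (a, i) * sqrt (s i))"
    unfolding V0_def s_def by (rule mult_diag_right[OF Vh S dg]) simp
  have mid: "map_mat (\<lambda>x. x) S = S" by (rule eq_matI) auto
  have USe: "Uh * S = mat m r (\<lambda>(a, i). Uh $$ (a, i) * s i)"
    using mult_diag_right[OF Uh S dg, of "\<lambda>x. x"] unfolding s_def mid by simp
  have Zab: "\<And>a b. a < m \<Longrightarrow> b < n \<Longrightarrow> Z $$ (a, b) = (\<Sum>i<r. Uh $$ (a, i) * s i * Vh $$ (b, i))"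
  proof -
    fix a b assume a: "a < m" and b: "b < n"
    show "Z $$ (a, b) = (\<Sum>i<r. Uh $$ (a, i) * s i * Vh $$ (b, i))"
      unfolding ZS USe using a b Vh by (auto simp: scalar_prod_def atLeast0LessThan intro!: sum.cong)
  qed
  have cUc: "\<And>i. col Uh i \<in> carrier_vec m" and cVc: "\<And>i. col Vh i \<in> carrier_vec n" using Uh Vh by auto
  have UUe: "\<And>i j. i < r \<Longrightarrow> j < r \<Longrightarrow> col Uh i \<bullet> col Uh j = (if i = j then 1 else 0)"
  proof -
    fix i j assume i: "i < r" and j: "j < r"
    have "(transpose_mat Uh * Uh) $$ (i, j) = col Uh i \<bullet> col Uh j" using Uh i j by simp
    thus "col Uh i \<bullet> col Uh j = (if i = j then 1 else 0)" using UU i j by simp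
  qed
  have VVe: "\<And>i j. i < r \<Longrightarrow> j < r \<Longrightarrow> col Vh i \<bullet> col Vh j = (if i = j then 1 else 0)"
  proof -
    fix i j assume i: "i < r" and j: "j < r"
    have "(transpose_mat Vh * Vh) $$ (i, j) = col Vh i \<bullet> col Vh j" using Vh i j by simp
    thus "col Vh i \<bullet> col Vh j = (if i = j then 1 else 0)" using VV i j by simp
  qed
  show "Z = U0 * transpose_mat V0"
  proof (rule eq_matI)
    fix a b assume "a < dim_row (U0 * transpose_mat V0)" "b < dim_col (U0 * transpose_mat V0)"
    hence a: "a < m" and b: "b < n" using U0 V0 by auto
    have "(U0 * transpose_mat V0) $$ (a, b) = (\<Sum>i<r. (Uh $$ (a, i) * sqrt (s i)) * (Vh $$ (b, i) * sqrt (s i)))"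
      unfolding U0e V0e using a b by (auto simp: scalar_prod_def atLeast0LessThan intro!: sum.cong)
    also have "\<dots> = (\<Sum>i<r. Uh $$ (a, i) * s i * Vh $$ (b, i))"
    proof (intro sum.cong refl)
      fix i assume "i \<in> {..<r}"
      hence "s i > 0" using spos unfolding s_def by simp
      hence "sqrt (s i) * sqrt (s i) = s i" by simp
      show "(Uh $$ (a, i) * sqrt (s i)) * (Vh $$ (b, i) * sqrt (s i)) = Uh $$ (a, i) * s i * Vh $$ (b, i)"
      proof -
        have "\<And>x y q :: real. (x * q) * (y * q) = x * (q * q) * y" by (simp add: mult_ac)
        thus ?thesis using \<open>sqrt (s i) * sqrt (s i) = s i\<close> by simp
      qed
    qed
    finally show "Z $$ (a, b) = (U0 * transpose_mat V0) $$ (a, b)" using Zab[OF a b] by simp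
  qed (use Z U0 V0 in auto)
  have frobs: "(frob_norm U0)\<^sup>2 = (\<Sum>i<r. s i)" "(frob_norm V0)\<^sup>2 = (\<Sum>i<r. s i)"
  proof -
    have "(frob_norm U0)\<^sup>2 = (\<Sum>i<r. col U0 i \<bullet> col U0 i)" by (rule frob_sq(1)[OF U0])
    also have "\<dots> = (\<Sum>i<r. s i)"
    proof (intro sum.cong refl)
      fix i assume "i \<in> {..<r}"
      hence i: "i < r" by simp
      have "col U0 i = sqrt (s i) \<cdot>\<^sub>v col Uh i" unfolding U0e using i Uh by (auto intro!: eq_vecI)
      hence "col U0 i \<bullet> col U0 i = sqrt (s i) * sqrt (s i) * (col Uh i \<bullet> col Uh i)" using cUc[of i] by simp
      thus "col U0 i \<bullet> col U0 i = s i" using UUe[OF i i] spos i unfolding s_def by (simp add: less_imp_le)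
    qed
    finally show "(frob_norm U0)\<^sup>2 = (\<Sum>i<r. s i)" .
    have "(frob_norm V0)\<^sup>2 = (\<Sum>i<r. col V0 i \<bullet> col V0 i)" by (rule frob_sq(1)[OF V0])
    also have "\<dots> = (\<Sum>i<r. s i)"
    proof (intro sum.cong refl)
      fix i assume "i \<in> {..<r}"
      hence i: "i < r" by simp
      have "col V0 i = sqrt (s i) \<cdot>\<^sub>v col Vh i" unfolding V0e using i Vh by (auto intro!: eq_vecI)
      hence "col V0 i \<bullet> col V0 i = sqrt (s i) * sqrt (s i) * (col Vh i \<bullet> col Vh i)" using cVc[of i] by simp
      thus "col V0 i \<bullet> col V0 i = s i" using VVe[OF i i] spos i unfolding s_def by (simp add: less_imp_le)
    qed
    finally show "(frob_norm V0)\<^sup>2 = (\<Sum>i<r. s i)" .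
  qed
  have Zv: "\<And>v. v \<in> carrier_vec n \<Longrightarrow> Z *\<^sub>v v = vec m (\<lambda>a. \<Sum>i<r. (s i * (col Vh i \<bullet> v)) * col Uh i $ a)"
  proof -
    fix v :: "real vec" assume v: "v \<in> carrier_vec n"
    show "Z *\<^sub>v v = vec m (\<lambda>a. \<Sum>i<r. (s i * (col Vh i \<bullet> v)) * col Uh i $ a)"
    proof (rule eq_vecI)
      fix a assume "a < dim_vec (vec m (\<lambda>a. \<Sum>i<r. (s i * (col Vh i \<bullet> v)) * col Uh i $ a))"
      hence a: "a < m" by simp
      have "(Z *\<^sub>v v) $ a = (\<Sum>b<n. Z $$ (a, b) * v $ b)"
        using Z a v by (auto simp: sprod_sum[of _ n] intro!: sum.cong)
      also have "\<dots> = (\<Sum>b<n. (\<Sum>i<r. Uh $$ (a, i) * s i * Vh $$ (b, i)) * v $ b)"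
        using Zab a by simp
      also have "\<dots> = (\<Sum>i<r. Uh $$ (a, i) * s i * (\<Sum>b<n. Vh $$ (b, i) * v $ b))"
        by (simp add: sum_distrib_left sum_distrib_right mult_ac) (rule sum.swap)
      also have "\<dots> = (\<Sum>i<r. (s i * (col Vh i \<bullet> v)) * col Uh i $ a)"
        using Uh Vh a v by (auto simp: sprod_sum[of _ n] intro!: sum.cong)
      finally show "(Z *\<^sub>v v) $ a = vec m (\<lambda>a. \<Sum>i<r. (s i * (col Vh i \<bullet> v)) * col Uh i $ a) $ a"
        using a by simp
    qed (use Z in auto)
  qed
  have ZTu: "\<And>u. u \<in> carrier_vec m \<Longrightarrow> transpose_mat Z *\<^sub>v u = vec n (\<lambda>b. \<Sum>i<r. (s i * (col Uh i \<bullet> u)) * col Vh i $ b)"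
  proof -
    fix u :: "real vec" assume u: "u \<in> carrier_vec m"
    show "transpose_mat Z *\<^sub>v u = vec n (\<lambda>b. \<Sum>i<r. (s i * (col Uh i \<bullet> u)) * col Vh i $ b)"
    proof (rule eq_vecI)
      fix b assume "b < dim_vec (vec n (\<lambda>b. \<Sum>i<r. (s i * (col Uh i \<bullet> u)) * col Vh i $ b))"
      hence b: "b < n" by simp
      have "(transpose_mat Z *\<^sub>v u) $ b = (\<Sum>a<m. Z $$ (a, b) * u $ a)"
        using Z b u by (auto simp: sprod_sum[of _ m] intro!: sum.cong)
      also have "\<dots> = (\<Sum>a<m. (\<Sum>i<r. Uh $$ (a, i) * s i * Vh $$ (b, i)) * u $ a)"
        using Zab b by simp
      also have "\<dots> = (\<Sum>i<r. Vh $$ (b, i) * s i * (\<Sum>a<m. Uh $$ (a, i) * u $ a))"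
        by (simp add: sum_distrib_left sum_distrib_right mult_ac) (rule sum.swap)
      also have "\<dots> = (\<Sum>i<r. (s i * (col Uh i \<bullet> u)) * col Vh i $ b)"
        using Uh Vh b u by (auto simp: sprod_sum[of _ m] intro!: sum.cong)
      finally show "(transpose_mat Z *\<^sub>v u) $ b = vec n (\<lambda>b. \<Sum>i<r. (s i * (col Uh i \<bullet> u)) * col Vh i $ b) $ b"
        using b by simp
    qed (use Z in auto)
  qed
  have ZVj: "\<And>j. j < r \<Longrightarrow> Z *\<^sub>v col Vh j = s j \<cdot>\<^sub>v col Uh j"
  proof -
    fix j assume j: "j < r"
    show "Z *\<^sub>v col Vh j = s j \<cdot>\<^sub>v col Uh j"
    proof (rule eq_vecI)
      fix a assume "a < dim_vec (s j \<cdot>\<^sub>v col Uh j)"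
      hence a: "a < m" using Uh by simp
      have "(Z *\<^sub>v col Vh j) $ a = (\<Sum>i<r. (s i * (col Vh i \<bullet> col Vh j)) * col Uh i $ a)"
        using Zv[OF cVc] a by simp
      also have "\<dots> = (\<Sum>i<r. if i = j then s j * col Uh j $ a else 0)"
        using VVe j by (intro sum.cong refl) auto
      also have "\<dots> = s j * col Uh j $ a" using j by simp
      finally show "(Z *\<^sub>v col Vh j) $ a = (s j \<cdot>\<^sub>v col Uh j) $ a" using a Uh by simp
    qed (use Z Uh in auto)
  qed
  have ZTUj: "\<And>j. j < r \<Longrightarrow> transpose_mat Z *\<^sub>v col Uh j = s j \<cdot>\<^sub>v col Vh j"
  proof -
    fix j assume j: "j < r"
    show "transpose_mat Z *\<^sub>v col Uh j = s j \<cdot>\<^sub>v col Vh j"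
    proof (rule eq_vecI)
      fix b assume "b < dim_vec (s j \<cdot>\<^sub>v col Vh j)"
      hence b: "b < n" using Vh by simp
      have "(transpose_mat Z *\<^sub>v col Uh j) $ b = (\<Sum>i<r. (s i * (col Uh i \<bullet> col Uh j)) * col Vh i $ b)"
        using ZTu[OF cUc] b by simp
      also have "\<dots> = (\<Sum>i<r. if i = j then s j * col Vh j $ b else 0)"
        using UUe j by (intro sum.cong refl) auto
      also have "\<dots> = s j * col Vh j $ b" using j by simp
      finally show "(transpose_mat Z *\<^sub>v col Uh j) $ b = (s j \<cdot>\<^sub>v col Vh j) $ b" using b Vh by simp
    qed (use Z Vh in auto)
  qed
  define A where "A = transpose_mat Z * Z"
  have A: "A \<in> carrier_mat n n" unfolding A_def using Z by auto
  have ev0: "\<forall>j<r. A *\<^sub>v col Vh j = (s j * s j) \<cdot>\<^sub>v col Vh j"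
  proof (intro allI impI)
    fix j assume j: "j < r"
    have "A *\<^sub>v col Vh j = transpose_mat Z *\<^sub>v (Z *\<^sub>v col Vh j)"
      unfolding A_def using Z cVc[of j] by (simp add: assoc_mult_mat_vec[of _ n m _ n])
    also have "\<dots> = transpose_mat Z *\<^sub>v (s j \<cdot>\<^sub>v col Uh j)" using ZVj[OF j] by simp
    also have "\<dots> = s j \<cdot>\<^sub>v (transpose_mat Z *\<^sub>v col Uh j)"
      using Z cUc[of j] by (simp add: mult_mat_vec)
    also have "\<dots> = (s j * s j) \<cdot>\<^sub>v col Vh j" using ZTUj[OF j] by (simp add: smult_smult_assoc)
    finally show "A *\<^sub>v col Vh j = (s j * s j) \<cdot>\<^sub>v col Vh j" .
  qed
  have o0: "orthonormal n r (\<lambda>i. col Vh i)" unfolding orthonormal_def using cVc VVe by auto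
  have rn: "r \<le> n" by (rule orthonormal_le[OF o0])
  obtain w' d' where o': "orthonormal n n w'" and wd: "\<forall>i<r. w' i = col Vh i \<and> d' i = s i * s i"
      and ev': "\<forall>i<n. A *\<^sub>v w' i = d' i \<cdot>\<^sub>v w' i"
    using spectral_extend[OF A ZtZ_sym[OF Z, folded A_def] o0 rn ev0] by blast
  have N: "nuclear_norm Z = (\<Sum>i<n. sqrt (d' i))" and dform: "\<forall>i<n. d' i = (Z *\<^sub>v w' i) \<bullet> (Z *\<^sub>v w' i)"
    using nuclear_from_eig[OF Z o' ev'[unfolded A_def]] by auto
  have w'c: "\<And>i. i < n \<Longrightarrow> w' i \<in> carrier_vec n" using o' unfolding orthonormal_def by auto
  have hi: "\<And>i. r \<le> i \<Longrightarrow> i < n \<Longrightarrow> d' i = 0"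
  proof -
    fix i assume ri: "r \<le> i" and i: "i < n"
    have "Z *\<^sub>v w' i = vec m (\<lambda>a. \<Sum>j<r. (s j * (col Vh j \<bullet> w' i)) * col Uh j $ a)"
      using Zv[OF w'c[OF i]] .
    also have "\<dots> = vec m (\<lambda>a. \<Sum>j<r. 0)"
    proof (intro arg_cong[where f = "vec m"] ext sum.cong refl)
      fix a j assume "j \<in> {..<r}"
      hence j: "j < r" by simp
      have "col Vh j \<bullet> w' i = w' j \<bullet> w' i" using wd j by simp
      also have "\<dots> = 0" using o' j ri i rn unfolding orthonormal_def by auto
      finally show "(s j * (col Vh j \<bullet> w' i)) * col Uh j $ a = 0" by simp
    qed
    finally have "Z *\<^sub>v w' i = 0\<^sub>v m" by (auto intro!: eq_vecI)
    thus "d' i = 0" using dform i by simp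
  qed
  have "nuclear_norm Z = (\<Sum>i<r. sqrt (d' i))"
    unfolding N by (rule sum.mono_neutral_right) (use rn hi in auto)
  also have "\<dots> = (\<Sum>i<r. s i)"
  proof (intro sum.cong refl)
    fix i assume "i \<in> {..<r}"
    hence i: "i < r" by simp
    have "s i > 0" using spos i unfolding s_def by simp
    thus "sqrt (d' i) = s i" using wd i by (simp add: real_sqrt_mult)
  qed
  finally have Nr: "nuclear_norm Z = (\<Sum>i<r. s i)" .
  show "(frob_norm (Uh * map_mat sqrt S))\<^sup>2 = nuclear_norm Z"
    using frobs(1) Nr unfolding U0_def by simp
  show "(frob_norm (Vh * map_mat sqrt S))\<^sup>2 = nuclear_norm Z"
    using frobs(2) Nr unfolding V0_def by simp
qed

theorem lemma1:
  fixes \<alpha> lam :: real and Z :: "real mat" and m n :: nat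
  assumes "\<alpha> > 0" and "lam > 0" and "Z \<in> carrier_mat m n"
  defines "obj \<equiv> (%U V. (1/2) * (lam * frob_norm U powr (2 * \<alpha>)
                                   + (1 / lam) * frob_norm V powr (2 * \<alpha>)))"
  shows "(nuclear_norm Z powr \<alpha> \<in>
           {obj U V | k U V. U \<in> carrier_mat m k \<and> V \<in> carrier_mat n k \<and>
                             Z = U * transpose_mat V}) \<and>
         (\<forall>k U V. U \<in> carrier_mat m k \<and> V \<in> carrier_mat n k \<and> Z = U * transpose_mat V
            \<longrightarrow> nuclear_norm Z powr \<alpha> \<le> obj U V) \<and>
         (\<forall>r Uh S Vh. compact_svd Z m n r Uh S Vh \<longrightarrow>
           (let U = (lam powr (- 1 / (2 * \<alpha>))) \<cdot>\<^sub>m (Uh * map_mat sqrt S);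
                V = (lam powr (1 / (2 * \<alpha>))) \<cdot>\<^sub>m (Vh * map_mat sqrt S)
            in Z = U * transpose_mat V \<and> nuclear_norm Z powr \<alpha> = obj U V))"
proof -
  note a = assms(1) and l = assms(2) and Z = assms(3)
  have N0: "nuclear_norm Z \<ge> 0" using exists_balanced(2)[OF Z] .
  obtain U0 V0 where U0: "U0 \<in> carrier_mat m n" and V0: "V0 \<in> carrier_mat n n"
    and ZUV: "Z = U0 * transpose_mat V0" and fU: "(frob_norm U0)\<^sup>2 = nuclear_norm Z"
    and fV: "(frob_norm V0)\<^sup>2 = nuclear_norm Z"
    using exists_balanced(1)[OF Z] by blast
  define c1 where "c1 = lam powr (- 1 / (2 * \<alpha>))"
  define c2 where "c2 = lam powr (1 / (2 * \<alpha>))"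
  have s1: "Z = (c1 \<cdot>\<^sub>m U0) * transpose_mat (c2 \<cdot>\<^sub>m V0)"
    and s2: "nuclear_norm Z powr \<alpha> = obj (c1 \<cdot>\<^sub>m U0) (c2 \<cdot>\<^sub>m V0)"
    using scaled_obj[OF a l U0 V0 ZUV fU fV] unfolding obj_def c1_def c2_def by auto
  have part1: "nuclear_norm Z powr \<alpha> \<in>
           {obj U V | k U V. U \<in> carrier_mat m k \<and> V \<in> carrier_mat n k \<and>
                             Z = U * transpose_mat V}"
    using s1 s2 U0 V0 by (intro CollectI exI[of _ n] exI[of _ "c1 \<cdot>\<^sub>m U0"] exI[of _ "c2 \<cdot>\<^sub>m V0"]) auto
  have part2: "\<forall>k U V. U \<in> carrier_mat m k \<and> V \<in> carrier_mat n k \<and> Z = U * transpose_mat V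
            \<longrightarrow> nuclear_norm Z powr \<alpha> \<le> obj U V"
  proof (intro allI impI)
    fix k U V assume h: "U \<in> carrier_mat m k \<and> V \<in> carrier_mat n k \<and> Z = U * transpose_mat V"
    hence U: "U \<in> carrier_mat m k" and V: "V \<in> carrier_mat n k" and ZUV': "Z = U * transpose_mat V" by auto
    have "nuclear_norm Z \<le> frob_norm U * frob_norm V" by (rule nuc_le_frob[OF U V ZUV'])
    thus "nuclear_norm Z powr \<alpha> \<le> obj U V" unfolding obj_def
      using amgm_obj[OF a l frob_sq(2)[OF U] frob_sq(2)[OF V] N0] by simp
  qed
  have part3: "\<forall>r Uh S Vh. compact_svd Z m n r Uh S Vh \<longrightarrow>
           (let U = (lam powr (- 1 / (2 * \<alpha>))) \<cdot>\<^sub>m (Uh * map_mat sqrt S);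
                V = (lam powr (1 / (2 * \<alpha>))) \<cdot>\<^sub>m (Vh * map_mat sqrt S)
            in Z = U * transpose_mat V \<and> nuclear_norm Z powr \<alpha> = obj U V)"
  proof (intro allI impI)
    fix r Uh S Vh assume svd: "compact_svd Z m n r Uh S Vh"
    note sv = svd_facts[OF Z svd]
    show "let U = (lam powr (- 1 / (2 * \<alpha>))) \<cdot>\<^sub>m (Uh * map_mat sqrt S);
                V = (lam powr (1 / (2 * \<alpha>))) \<cdot>\<^sub>m (Vh * map_mat sqrt S)
            in Z = U * transpose_mat V \<and> nuclear_norm Z powr \<alpha> = obj U V"
      using scaled_obj[OF a l sv(4) sv(5) sv(1) sv(2) sv(3)] unfolding obj_def Let_def by auto
  qed
  show ?thesis using part1 part2 part3 by blast
qed

end
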